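(* Let $\eta_1,\eta_2,\dots$ be iid with $\Pr(\eta_1\le x)=e^x$, $x\le0$. Let $d\in\mathbb{N}$, let $1\le j_1<j_2<\dots<j_d$ be integers, and set $j_0=0$. Then for all $x_1,\dots,x_d\le 0$, \[ \Pr(\eta_{j_m}\le x_m,\ 1\le m\le d\mid \eta_{j_1},\dots,\eta_{j_d}\text{ are records}) =\frac{\prod_{m=2}^d j_m}{\prod_{m=2}^d (j_m-j_{m-1})}\, \Pr\left(\frac{\eta_m}{j_m-j_{m-1}}\le x_m,\ \frac{(j_{m+1}-j_m)\eta_m}{j_m-j_{m-1}}<\eta_{m+1},\ 1\le m\le d-1,\ \frac{\eta_d}{j_d-j_{d-1}}\le x_d\right). \]
   Context: $\eta_m$ is a record if $\eta_m>\max(\eta_1,\dots,\eta_{m-1})$; $\eta_1$ is always a record. The conditioning event is the intersection of the $d$ record events. *)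

theory Defs
  imports "HOL-Probability.Probability"
begin

definition is_record :: "(nat \<Rightarrow> 'a \<Rightarrow> real) \<Rightarrow> nat \<Rightarrow> 'a \<Rightarrow> bool" where
  "is_record \<eta> m \<omega> \<longleftrightarrow> (\<forall>k\<in>{1..<m}. \<eta> k \<omega> < \<eta> m \<omega>)"

end

theory Submission
  imports Defs "HOL-Real_Asymp.Real_Asymp"
begin

lemma exp_int:
  fixes k y :: real assumes k: "k > 0"
  shows "(\<integral>\<^sup>+x. ennreal (exp (k * x)) * indicator {..y} x \<partial>lborel) = ennreal (exp (k*y) / k)"
proof -
  have "(\<integral>\<^sup>+x. ennreal (exp (k * x)) * indicator {..y} x \<partial>lborel)
      = (\<integral>\<^sup>+x. ennreal (exp (k * x)) * indicator {..y} x \<partial>(distr lborel borel uminus))"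
    by (simp add: lborel_distr_uminus)
  also have "\<dots> = (\<integral>\<^sup>+x. ennreal (exp (k*(-x))) * indicator {..y} (-x) \<partial>lborel)"
    by (subst nn_integral_distr) auto
  also have "\<dots> = (\<integral>\<^sup>+x. ennreal (exp (-k*x)) * indicator {-y..} x \<partial>lborel)"
    by (intro nn_integral_cong) (auto split: split_indicator)
  also have "\<dots> = 0 - (- exp (-k*(-y)) / k)"
  proof (rule nn_integral_FTC_atLeast[where F="\<lambda>x. - exp (-k*x) / k"])
    show "((\<lambda>x. - exp (- k * x) / k) \<longlongrightarrow> 0) at_top" using k by real_asymp
  qed (use k in \<open>auto intro!: derivative_eq_intros\<close>)
  finally show ?thesis by simp
qed

definition Deta :: "real measure" where
  "Deta = density lborel (\<lambda>x. ennreal (exp x) * indicator {..0} x)"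

lemma Deta_emeasure_le:
  "emeasure Deta {..t} = ennreal (exp (min t 0))"
proof -
  have "emeasure Deta {..t} = (\<integral>\<^sup>+x. ennreal (exp x) * indicator {..0} x * indicator {..t} x \<partial>lborel)"
    unfolding Deta_def by (subst emeasure_density) auto
  also have "\<dots> = (\<integral>\<^sup>+x. ennreal (exp (1 * x)) * indicator {..min t 0} x \<partial>lborel)"
    by (intro nn_integral_cong) (auto split: split_indicator)
  also have "\<dots> = ennreal (exp (min t 0))"
    by (subst exp_int) auto
  finally show ?thesis .
qed

lemma Deta_emeasure_less:
  "emeasure Deta {..<t} = ennreal (exp (min t 0))"
proof -
  have "emeasure Deta {..<t} = (\<integral>\<^sup>+x. ennreal (exp x) * indicator {..0} x * indicator {..<t} x \<partial>lborel)"
    unfolding Deta_def by (subst emeasure_density) auto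
  also have "\<dots> = (\<integral>\<^sup>+x. ennreal (exp (1 * x)) * indicator {..min t 0} x \<partial>lborel)"
    by (intro nn_integral_cong_AE, use AE_lborel_singleton[of t] in eventually_elim)
       (auto split: split_indicator)
  also have "\<dots> = ennreal (exp (min t 0))"
    by (subst exp_int) auto
  finally show ?thesis .
qed

lemma real_distribution_Deta: "real_distribution Deta"
proof -
  have "emeasure Deta UNIV = 1"
  proof -
    have "emeasure Deta UNIV = emeasure Deta {..0}"
    proof -
      have "emeasure Deta UNIV = (\<integral>\<^sup>+x. ennreal (exp x) * indicator {..0} x * indicator UNIV x \<partial>lborel)"
        unfolding Deta_def by (subst emeasure_density) auto
      also have "\<dots> = (\<integral>\<^sup>+x. ennreal (exp x) * indicator {..0} x * indicator {..0} x \<partial>lborel)"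
        by (intro nn_integral_cong) (auto split: split_indicator)
      also have "\<dots> = emeasure Deta {..0}"
        unfolding Deta_def by (subst emeasure_density) auto
      finally show ?thesis .
    qed
    then show ?thesis using Deta_emeasure_le[of 0] by simp
  qed
  moreover have "space Deta = UNIV" by (simp add: Deta_def)
  ultimately have "prob_space Deta" by (intro prob_spaceI) simp
  moreover have "sets Deta = sets borel" by (simp add: Deta_def)
  ultimately show ?thesis unfolding real_distribution_def real_distribution_axioms_def by simp
qed

lemma nn_integral_Deta:
  assumes [measurable]: "f \<in> borel_measurable borel"
  shows "(\<integral>\<^sup>+x. f x \<partial>Deta) = (\<integral>\<^sup>+x. ennreal (exp x) * indicator {..0} x * f x \<partial>lborel)"
  unfolding Deta_def by (subst nn_integral_density) auto


lemma comp_meas_any[measurable]: "(\<lambda>f::nat\<Rightarrow>real. f i) \<in> borel_measurable (PiM I (\<lambda>_. borel::real measure))"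
proof (cases "i \<in> I")
  case True then show ?thesis by (rule measurable_component_singleton)
next
  case False
  have "(\<lambda>f::nat\<Rightarrow>real. undefined :: real) \<in> borel_measurable (PiM I (\<lambda>_. borel::real measure))" by simp
  then show ?thesis
    by (rule measurable_cong[THEN iffD1, rotated]) (use False in \<open>auto simp: space_PiM PiE_def extensional_def\<close>)
qed

definition SL :: "'a measure \<Rightarrow> real \<Rightarrow> 'a set \<Rightarrow> ('a \<Rightarrow> real) \<Rightarrow> real measure" where
  "SL M c H X = distr (density M (\<lambda>\<omega>. ennreal c * indicator H \<omega>)) borel X"

definition phi :: "nat \<Rightarrow> real \<Rightarrow> real \<Rightarrow> ennreal" where
  "phi k y s = ennreal (if s \<le> y then (exp (real k * y) - exp (real k * s)) / real k else 0)"

definition psi :: "real \<Rightarrow> real \<Rightarrow> real \<Rightarrow> ennreal" where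
  "psi c y s = ennreal (if s \<le> y then exp (c * y) - exp (c * s) else 0)"

lemma phi_meas[measurable]: "phi k y \<in> borel_measurable borel"
  unfolding phi_def by measurable

lemma psi_meas[measurable]: "psi c y \<in> borel_measurable borel"
  unfolding psi_def by measurable

lemma phi_psi: "k \<ge> 1 \<Longrightarrow> phi k y s = ennreal (1 / real k) * psi (real k) y s"
  unfolding phi_def psi_def
  by (auto simp: ennreal_mult'[symmetric] divide_simps intro!: arg_cong[where f=ennreal])

context prob_space
begin

lemma SL_emeasure:
  assumes [measurable]: "X \<in> borel_measurable M" "H \<in> events" "A \<in> sets borel" and c: "c \<ge> 0"
  shows "emeasure (SL M c H X) A = ennreal c * emeasure M (H \<inter> {\<omega>\<in>space M. X \<omega> \<in> A})"
proof -
  have "emeasure (SL M c H X) A = emeasure (density M (\<lambda>\<omega>. ennreal c * indicator H \<omega>)) (X -` A \<inter> space M)"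
    unfolding SL_def by (subst emeasure_distr) auto
  also have "\<dots> = (\<integral>\<^sup>+\<omega>. ennreal c * indicator H \<omega> * indicator (X -` A \<inter> space M) \<omega> \<partial>M)"
    by (subst emeasure_density) auto
  also have "\<dots> = (\<integral>\<^sup>+\<omega>. ennreal c * indicator (H \<inter> {\<omega>\<in>space M. X \<omega> \<in> A}) \<omega> \<partial>M)"
    by (intro nn_integral_cong) (auto split: split_indicator)
  also have "\<dots> = ennreal c * emeasure M (H \<inter> {\<omega>\<in>space M. X \<omega> \<in> A})"
    by (subst nn_integral_cmult) auto
  finally show ?thesis .
qed

lemma SL_finite:
  assumes [measurable]: "X \<in> borel_measurable M" "H \<in> events" and c: "c \<ge> 0"
  shows "finite_borel_measure (SL M c H X)"
proof -
  have sp: "space (SL M c H X) = UNIV" by (simp add: SL_def)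
  have "emeasure (SL M c H X) UNIV = ennreal c * emeasure M (H \<inter> {\<omega>\<in>space M. X \<omega> \<in> UNIV})"
    using c by (intro SL_emeasure) auto
  also have "\<dots> < top" 
  proof -
    have "emeasure M (H \<inter> {\<omega>\<in>space M. X \<omega> \<in> UNIV}) \<le> 1" by (rule emeasure_le_1)
    then have "emeasure M (H \<inter> {\<omega>\<in>space M. X \<omega> \<in> UNIV}) < top"
      by (rule order.strict_trans1[OF _ ennreal_one_less_top])
    then show ?thesis by (simp add: ennreal_mult_less_top)
  qed
  finally have "emeasure (SL M c H X) (space (SL M c H X)) \<noteq> top" by (simp add: sp)
  then interpret finite_measure "SL M c H X" by (intro finite_measureI) simp
  show ?thesis by unfold_locales (simp add: SL_def)
qed

lemma SL_eqI:
  assumes [measurable]: "X \<in> borel_measurable M" "Y \<in> borel_measurable M" "G \<in> events" "H \<in> events"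
    and c: "c1 \<ge> 0" "c2 \<ge> 0"
    and AEX: "AE \<omega> in M. X \<omega> \<le> 0" and AEY: "AE \<omega> in M. Y \<omega> \<le> 0"
    and eq: "\<And>t. t \<le> 0 \<Longrightarrow> ennreal c1 * emeasure M (G \<inter> {\<omega>\<in>space M. X \<omega> \<le> t})
                         = ennreal c2 * emeasure M (H \<inter> {\<omega>\<in>space M. Y \<omega> \<le> t})"
  shows "SL M c1 G X = SL M c2 H Y"
proof (rule cdf_unique')
  show "finite_borel_measure (SL M c1 G X)" "finite_borel_measure (SL M c2 H Y)"
    using c by (auto intro: SL_finite)
  have eq': "ennreal c1 * emeasure M (G \<inter> {\<omega>\<in>space M. X \<omega> \<le> t})
                         = ennreal c2 * emeasure M (H \<inter> {\<omega>\<in>space M. Y \<omega> \<le> t})" for t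
  proof (cases "t \<le> 0")
    case True then show ?thesis by (rule eq)
  next
    case False
    have "emeasure M (G \<inter> {\<omega>\<in>space M. X \<omega> \<le> t}) = emeasure M (G \<inter> {\<omega>\<in>space M. X \<omega> \<le> 0})"
      by (rule emeasure_eq_AE) (use AEX False in \<open>auto elim!: eventually_mono\<close>)
    moreover have "emeasure M (H \<inter> {\<omega>\<in>space M. Y \<omega> \<le> t}) = emeasure M (H \<inter> {\<omega>\<in>space M. Y \<omega> \<le> 0})"
      by (rule emeasure_eq_AE) (use AEY False in \<open>auto elim!: eventually_mono\<close>)
    ultimately show ?thesis using eq[of 0] by simp
  qed
  show "cdf (SL M c1 G X) = cdf (SL M c2 H Y)"
  proof
    fix t
    have "emeasure (SL M c1 G X) {..t} = emeasure (SL M c2 H Y) {..t}"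
      using eq'[of t] c by (subst (1 2) SL_emeasure) auto
    then show "cdf (SL M c1 G X) t = cdf (SL M c2 H Y) t"
      unfolding cdf_def measure_def by simp
  qed
qed

lemma SL_integral:
  assumes [measurable]: "X \<in> borel_measurable M" "H \<in> events" "f \<in> borel_measurable borel"
  shows "(\<integral>\<^sup>+s. f s \<partial>SL M c H X) = (\<integral>\<^sup>+\<omega>. ennreal c * indicator H \<omega> * f (X \<omega>) \<partial>M)"
  unfolding SL_def by (subst nn_integral_distr) (auto simp: nn_integral_density)

end

locale recs = prob_space M for M :: "'a measure" +
  fixes \<eta> :: "nat \<Rightarrow> 'a \<Rightarrow> real"
  assumes rv: "\<And>i. i \<ge> 1 \<Longrightarrow> \<eta> i \<in> borel_measurable M"
    and indep: "indep_vars (\<lambda>_. borel) \<eta> {1..}"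
    and distr: "\<And>i t. i \<ge> 1 \<Longrightarrow> t \<le> 0 \<Longrightarrow> measure M {\<omega> \<in> space M. \<eta> i \<omega> \<le> t} = exp t"
begin

declare rv[measurable]

lemma law: assumes i: "i \<ge> 1" shows "distr M borel (\<eta> i) = Deta"
proof (rule cdf_unique)
  show "real_distribution (distr M borel (\<eta> i))" using rv[OF i] by simp
  show "real_distribution Deta" by (rule real_distribution_Deta)
  show "cdf (distr M borel (\<eta> i)) = cdf Deta"
  proof
    fix t :: real
    have "cdf (distr M borel (\<eta> i)) t = measure M {\<omega> \<in> space M. \<eta> i \<omega> \<le> t}"
      unfolding cdf_def using rv[OF i] by (subst measure_distr) (auto intro!: arg_cong[where f="measure M"])
    also have "\<dots> = exp (min t 0)"
    proof (cases "t \<le> 0")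
      case True then show ?thesis using distr[OF i True] by simp
    next
      case False
      have "1 = measure M {\<omega> \<in> space M. \<eta> i \<omega> \<le> 0}" using distr[OF i, of 0] by simp
      also have "\<dots> \<le> measure M {\<omega> \<in> space M. \<eta> i \<omega> \<le> t}"
        using False rv[OF i] by (intro finite_measure_mono) auto
      finally show ?thesis using False by (simp add: antisym)
    qed
    also have "\<dots> = cdf Deta t"
      unfolding cdf_def measure_def using Deta_emeasure_le[of t] by simp
    finally show "cdf (distr M borel (\<eta> i)) t = cdf Deta t" .
  qed
qed

lemma nn_integral_eta:
  assumes i: "i \<ge> 1" and [measurable]: "f \<in> borel_measurable borel"
  shows "(\<integral>\<^sup>+\<omega>. f (\<eta> i \<omega>) \<partial>M) = (\<integral>\<^sup>+x. ennreal (exp x) * indicator {..0} x * f x \<partial>lborel)"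
proof -
  have "(\<integral>\<^sup>+\<omega>. f (\<eta> i \<omega>) \<partial>M) = (\<integral>\<^sup>+x. f x \<partial>distr M borel (\<eta> i))"
    using rv[OF i] by (subst nn_integral_distr) auto
  then show ?thesis by (simp add: law[OF i] nn_integral_Deta)
qed

lemma emeasure_eta_set:
  assumes i: "i \<ge> 1" and A: "A \<in> sets borel"
  shows "emeasure M {\<omega>\<in>space M. \<eta> i \<omega> \<in> A} = emeasure Deta A"
proof -
  have "emeasure M {\<omega>\<in>space M. \<eta> i \<omega> \<in> A} = emeasure (distr M borel (\<eta> i)) A"
    using rv[OF i] A by (subst emeasure_distr) (auto intro!: arg_cong[where f="emeasure M"])
  then show ?thesis by (simp add: law[OF i])
qed

lemma prob_less: assumes i: "i \<ge> 1" and z: "z \<le> 0"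
  shows "emeasure M {\<omega>\<in>space M. \<eta> i \<omega> < z} = ennreal (exp z)"
  using emeasure_eta_set[OF i, of "{..<z}"] Deta_emeasure_less[of z] z by simp

lemma prob_le: assumes i: "i \<ge> 1" and z: "z \<le> 0"
  shows "emeasure M {\<omega>\<in>space M. \<eta> i \<omega> \<le> z} = ennreal (exp z)"
  using emeasure_eta_set[OF i, of "{..z}"] Deta_emeasure_le[of z] z by simp

lemma AE_nonpos: assumes i: "i \<ge> 1" shows "AE \<omega> in M. \<eta> i \<omega> \<le> 0"
proof -
  have "emeasure M {\<omega>\<in>space M. \<eta> i \<omega> \<le> 0} = 1" using prob_le[OF i, of 0] by simp
  then have "prob {\<omega>\<in>space M. \<eta> i \<omega> \<le> 0} = 1" by (simp add: emeasure_eq_measure)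
  moreover have "{\<omega>\<in>space M. \<eta> i \<omega> \<le> 0} \<in> events" using rv[OF i] by measurable
  ultimately have "AE \<omega> in M. \<omega> \<in> {\<omega>\<in>space M. \<eta> i \<omega> \<le> 0}" using prob_eq_1 by blast
  then show ?thesis by eventually_elim auto
qed

lemma exp_moment:
  assumes i: "i \<ge> 1" and c: "c \<ge> 0" and y: "y \<le> 0"
  shows "(\<integral>\<^sup>+\<omega>. ennreal (exp (c * \<eta> i \<omega>)) * indicator {..y} (\<eta> i \<omega>) \<partial>M) = ennreal (exp ((c+1) * y) / (c+1))"
proof -
  have "(\<integral>\<^sup>+\<omega>. ennreal (exp (c * \<eta> i \<omega>)) * indicator {..y} (\<eta> i \<omega>) \<partial>M)
     = (\<integral>\<^sup>+x. ennreal (exp x) * indicator {..0} x * (ennreal (exp (c * x)) * indicator {..y} x) \<partial>lborel)"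
    by (rule nn_integral_eta[OF i]) auto
  also have "\<dots> = (\<integral>\<^sup>+x. ennreal (exp ((c+1) * x)) * indicator {..y} x \<partial>lborel)"
    using y by (intro nn_integral_cong) 
      (auto split: split_indicator simp: ennreal_mult'[symmetric] exp_add[symmetric] algebra_simps)
  also have "\<dots> = ennreal (exp ((c+1) * y) / (c+1))"
    using c by (intro exp_int) auto
  finally show ?thesis .
qed

lemma indep_decomp:
  assumes AB: "A \<inter> B = {}" "A \<subseteq> {1..}" "B \<subseteq> {1..}"
    and f: "f \<in> borel_measurable (PiM A (\<lambda>_. borel) \<Otimes>\<^sub>M PiM B (\<lambda>_. borel))"
  shows "(\<integral>\<^sup>+\<omega>. f (restrict (\<lambda>i. \<eta> i \<omega>) A, restrict (\<lambda>i. \<eta> i \<omega>) B) \<partial>M)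
       = (\<integral>\<^sup>+\<omega>. \<integral>\<^sup>+\<omega>'. f (restrict (\<lambda>i. \<eta> i \<omega>) A, restrict (\<lambda>i. \<eta> i \<omega>') B) \<partial>M \<partial>M)"
proof -
  let ?S = "PiM A (\<lambda>_. borel) :: (nat \<Rightarrow> real) measure"
  let ?T = "PiM B (\<lambda>_. borel) :: (nat \<Rightarrow> real) measure"
  let ?X = "\<lambda>\<omega>. restrict (\<lambda>i. \<eta> i \<omega>) A"
  let ?Y = "\<lambda>\<omega>. restrict (\<lambda>i. \<eta> i \<omega>) B"
  have iv: "indep_var ?S ?X ?T ?Y" by (rule indep_var_restrict[OF indep AB])
  then have X: "random_variable ?S ?X" and Y: "random_variable ?T ?Y"
    and eq: "distr M ?S ?X \<Otimes>\<^sub>M distr M ?T ?Y = distr M (?S \<Otimes>\<^sub>M ?T) (\<lambda>x. (?X x, ?Y x))"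
    unfolding indep_var_distribution_eq by auto
  interpret PX: prob_space "distr M ?S ?X" using X by (rule prob_space_distr)
  interpret PY: prob_space "distr M ?T ?Y" using Y by (rule prob_space_distr)
  have sets_eq: "sets (distr M ?S ?X \<Otimes>\<^sub>M distr M ?T ?Y) = sets (?S \<Otimes>\<^sub>M ?T)"
    by (simp add: eq)
  have fm: "f \<in> borel_measurable (distr M ?S ?X \<Otimes>\<^sub>M distr M ?T ?Y)"
    using f by (simp add: measurable_cong_sets[OF sets_eq refl])
  have XY: "(\<lambda>x. (?X x, ?Y x)) \<in> measurable M (?S \<Otimes>\<^sub>M ?T)" using X Y by (rule measurable_Pair)
  have "(\<integral>\<^sup>+\<omega>. f (?X \<omega>, ?Y \<omega>) \<partial>M) = (\<integral>\<^sup>+p. f p \<partial>distr M (?S \<Otimes>\<^sub>M ?T) (\<lambda>x. (?X x, ?Y x)))"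
    using XY f by (subst nn_integral_distr) auto
  also have "\<dots> = (\<integral>\<^sup>+p. f p \<partial>(distr M ?S ?X \<Otimes>\<^sub>M distr M ?T ?Y))" by (simp add: eq)
  also have "\<dots> = (\<integral>\<^sup>+x. \<integral>\<^sup>+y. f (x, y) \<partial>distr M ?T ?Y \<partial>distr M ?S ?X)"
    using PY.nn_integral_fst[OF fm] by simp
  also have "\<dots> = (\<integral>\<^sup>+x. \<integral>\<^sup>+\<omega>'. f (x, ?Y \<omega>') \<partial>M \<partial>distr M ?S ?X)"
  proof (intro nn_integral_cong)
    fix x assume x: "x \<in> space (distr M ?S ?X)"
    have "(\<lambda>y. f (x, y)) \<in> borel_measurable ?T"
      using measurable_compose_Pair1[of x ?S f ?T borel] f x by auto
    then show "(\<integral>\<^sup>+y. f (x, y) \<partial>distr M ?T ?Y) = (\<integral>\<^sup>+\<omega>'. f (x, ?Y \<omega>') \<partial>M)"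
      using Y by (subst nn_integral_distr) auto
  qed
  also have "\<dots> = (\<integral>\<^sup>+\<omega>. \<integral>\<^sup>+\<omega>'. f (?X \<omega>, ?Y \<omega>') \<partial>M \<partial>M)"
  proof -
    have m1: "(\<lambda>x. \<integral>\<^sup>+y. f (x, y) \<partial>distr M ?T ?Y) \<in> borel_measurable ?S"
      using PY.borel_measurable_nn_integral_fst[OF fm] by (simp cong: measurable_cong_sets)
    have m2: "(\<lambda>x. \<integral>\<^sup>+\<omega>'. f (x, ?Y \<omega>') \<partial>M) \<in> borel_measurable ?S"
    proof (rule measurable_cong[THEN iffD1, OF _ m1])
      fix x assume x: "x \<in> space ?S"
      have "(\<lambda>y. f (x, y)) \<in> borel_measurable ?T"
        using measurable_compose_Pair1[of x ?S f ?T borel] f x by auto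
      then show "(\<integral>\<^sup>+y. f (x, y) \<partial>distr M ?T ?Y) = (\<integral>\<^sup>+\<omega>'. f (x, ?Y \<omega>') \<partial>M)"
        using Y by (subst nn_integral_distr) auto
    qed
    show ?thesis using X m2 by (subst nn_integral_distr) auto
  qed
  finally show ?thesis .
qed

lemma decomp_gen:
  assumes AB: "A \<inter> B = {}" "A \<subseteq> {1..}" "B \<subseteq> {1..}"
    and P[measurable]: "Measurable.pred (PiM A (\<lambda>_. borel) \<Otimes>\<^sub>M PiM B (\<lambda>_. borel)) (\<lambda>p. P (fst p) (snd p))"
  shows "emeasure M {\<omega>\<in>space M. P (restrict (\<lambda>i. \<eta> i \<omega>) A) (restrict (\<lambda>i. \<eta> i \<omega>) B)}
       = (\<integral>\<^sup>+\<omega>. emeasure M {\<omega>'\<in>space M. P (restrict (\<lambda>i. \<eta> i \<omega>) A) (restrict (\<lambda>i. \<eta> i \<omega>') B)} \<partial>M)"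
proof -
  let ?S = "PiM A (\<lambda>_. borel) :: (nat \<Rightarrow> real) measure"
  let ?T = "PiM B (\<lambda>_. borel) :: (nat \<Rightarrow> real) measure"
  let ?Q = "{p\<in>space (?S \<Otimes>\<^sub>M ?T). P (fst p) (snd p)}"
  let ?f = "indicator ?Q :: _ \<Rightarrow> ennreal"
  have Q: "?Q \<in> sets (?S \<Otimes>\<^sub>M ?T)" by measurable
  have sp: "\<And>\<omega> \<omega>'. (restrict (\<lambda>i. \<eta> i \<omega>) A, restrict (\<lambda>i. \<eta> i \<omega>') B) \<in> space (?S \<Otimes>\<^sub>M ?T)"
    by (auto simp: space_pair_measure space_PiM)
  have ev: "{\<omega>'\<in>space M. P a (restrict (\<lambda>i. \<eta> i \<omega>') B)} \<in> events" if "a \<in> space ?S" for a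
  proof -
    have "(\<lambda>\<omega>'. restrict (\<lambda>i. \<eta> i \<omega>') B) \<in> measurable M ?T"
      using AB rv by (intro measurable_restrict) auto
    moreover have "Measurable.pred ?T (P a)"
      using measurable_compose_Pair1[OF that P] unfolding pred_def by simp
    ultimately show ?thesis by measurable
  qed
  have "emeasure M {\<omega>\<in>space M. P (restrict (\<lambda>i. \<eta> i \<omega>) A) (restrict (\<lambda>i. \<eta> i \<omega>) B)}
      = (\<integral>\<^sup>+\<omega>. ?f (restrict (\<lambda>i. \<eta> i \<omega>) A, restrict (\<lambda>i. \<eta> i \<omega>) B) \<partial>M)"
  proof -
    have "{\<omega>\<in>space M. P (restrict (\<lambda>i. \<eta> i \<omega>) A) (restrict (\<lambda>i. \<eta> i \<omega>) B)} \<in> events"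
    proof -
      have "(\<lambda>\<omega>. (restrict (\<lambda>i. \<eta> i \<omega>) A, restrict (\<lambda>i. \<eta> i \<omega>) B)) \<in> measurable M (?S \<Otimes>\<^sub>M ?T)"
        using AB rv by (intro measurable_Pair measurable_restrict) auto
      from measurable_compose[OF this P]
      have "Measurable.pred M (\<lambda>\<omega>. P (restrict (\<lambda>i. \<eta> i \<omega>) A) (restrict (\<lambda>i. \<eta> i \<omega>) B))" by simp
      then show ?thesis by (rule predE)
    qed
    then have "emeasure M {\<omega>\<in>space M. P (restrict (\<lambda>i. \<eta> i \<omega>) A) (restrict (\<lambda>i. \<eta> i \<omega>) B)}
      = (\<integral>\<^sup>+\<omega>. indicator {\<omega>\<in>space M. P (restrict (\<lambda>i. \<eta> i \<omega>) A) (restrict (\<lambda>i. \<eta> i \<omega>) B)} \<omega> \<partial>M)"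
      by simp
    also have "\<dots> = (\<integral>\<^sup>+\<omega>. ?f (restrict (\<lambda>i. \<eta> i \<omega>) A, restrict (\<lambda>i. \<eta> i \<omega>) B) \<partial>M)"
      by (intro nn_integral_cong) (auto simp: sp split: split_indicator)
    finally show ?thesis .
  qed
  also have "\<dots> = (\<integral>\<^sup>+\<omega>. \<integral>\<^sup>+\<omega>'. ?f (restrict (\<lambda>i. \<eta> i \<omega>) A, restrict (\<lambda>i. \<eta> i \<omega>') B) \<partial>M \<partial>M)"
    using Q by (intro indep_decomp AB) auto
  also have "\<dots> = (\<integral>\<^sup>+\<omega>. emeasure M {\<omega>'\<in>space M. P (restrict (\<lambda>i. \<eta> i \<omega>) A) (restrict (\<lambda>i. \<eta> i \<omega>') B)} \<partial>M)"
  proof (intro nn_integral_cong)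
    fix \<omega> assume "\<omega> \<in> space M"
    have a: "restrict (\<lambda>i. \<eta> i \<omega>) A \<in> space ?S" by (auto simp: space_PiM)
    show "(\<integral>\<^sup>+\<omega>'. ?f (restrict (\<lambda>i. \<eta> i \<omega>) A, restrict (\<lambda>i. \<eta> i \<omega>') B) \<partial>M)
        = emeasure M {\<omega>'\<in>space M. P (restrict (\<lambda>i. \<eta> i \<omega>) A) (restrict (\<lambda>i. \<eta> i \<omega>') B)}"
    proof -
      have "(\<integral>\<^sup>+\<omega>'. ?f (restrict (\<lambda>i. \<eta> i \<omega>) A, restrict (\<lambda>i. \<eta> i \<omega>') B) \<partial>M)
        = (\<integral>\<^sup>+\<omega>'. indicator {\<omega>'\<in>space M. P (restrict (\<lambda>i. \<eta> i \<omega>) A) (restrict (\<lambda>i. \<eta> i \<omega>') B)} \<omega>' \<partial>M)"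
        by (intro nn_integral_cong) (auto simp: sp split: split_indicator)
      also have "\<dots> = emeasure M {\<omega>'\<in>space M. P (restrict (\<lambda>i. \<eta> i \<omega>) A) (restrict (\<lambda>i. \<eta> i \<omega>') B)}"
        using ev[OF a] by simp
      finally show ?thesis .
    qed
  qed
  finally show ?thesis .
qed

lemma prod_less:
  assumes B: "finite B" "B \<subseteq> {1..}" and z: "z \<le> 0"
  shows "emeasure M {\<omega>\<in>space M. \<forall>i\<in>B. \<eta> i \<omega> < z} = ennreal (exp (real (card B) * z))"
proof (cases "B = {}")
  case True then show ?thesis by (simp add: emeasure_space_1)
next
  case False
  have m: "\<And>i. i \<in> B \<Longrightarrow> prob (\<eta> i -` {..<z} \<inter> space M) = exp z"
  proof -
    fix i assume "i \<in> B"
    then have i: "i \<ge> 1" using B by auto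
    have "emeasure M (\<eta> i -` {..<z} \<inter> space M) = ennreal (exp z)"
      using prob_less[OF i z] by (simp add: Int_def conj_commute Collect_conj_eq[symmetric])
    then show "prob (\<eta> i -` {..<z} \<inter> space M) = exp z" by (simp add: emeasure_eq_measure)
  qed
  have "{\<omega>\<in>space M. \<forall>i\<in>B. \<eta> i \<omega> < z} = (\<Inter>i\<in>B. \<eta> i -` {..<z} \<inter> space M)"
    using False by auto
  moreover have "prob (\<Inter>i\<in>B. \<eta> i -` {..<z} \<inter> space M) = (\<Prod>i\<in>B. prob (\<eta> i -` {..<z} \<inter> space M))"
    using False B by (intro indep_varsD[OF indep]) auto
  moreover have "(\<Prod>i\<in>B. prob (\<eta> i -` {..<z} \<inter> space M)) = exp (real (card B) * z)"
    using m by (simp add: exp_of_nat_mult)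
  ultimately show ?thesis by (simp add: emeasure_eq_measure)
qed

lemma block:
  assumes k: "k \<ge> 1" and y: "y \<le> 0"
  shows "emeasure M {\<omega>\<in>space M. (\<forall>i\<in>{n+1..<n+k}. \<eta> i \<omega> < \<eta> (n+k) \<omega>) \<and> \<eta> (n+k) \<omega> \<le> y}
       = ennreal (exp (real k * y) / real k)"
proof -
  let ?A = "{n+k}" and ?B = "{n+1..<n+k}"
  let ?P = "\<lambda>(a::nat\<Rightarrow>real) (b::nat\<Rightarrow>real). (\<forall>i\<in>?B. b i < a (n+k)) \<and> a (n+k) \<le> y"
  have "emeasure M {\<omega>\<in>space M. (\<forall>i\<in>{n+1..<n+k}. \<eta> i \<omega> < \<eta> (n+k) \<omega>) \<and> \<eta> (n+k) \<omega> \<le> y}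
      = emeasure M {\<omega>\<in>space M. ?P (restrict (\<lambda>i. \<eta> i \<omega>) ?A) (restrict (\<lambda>i. \<eta> i \<omega>) ?B)}"
    by (intro arg_cong[where f="emeasure M"]) auto
  also have "\<dots> = (\<integral>\<^sup>+\<omega>. emeasure M {\<omega>'\<in>space M. ?P (restrict (\<lambda>i. \<eta> i \<omega>) ?A) (restrict (\<lambda>i. \<eta> i \<omega>') ?B)} \<partial>M)"
    using k by (intro decomp_gen) (auto, measurable)
  also have "\<dots> = (\<integral>\<^sup>+\<omega>. ennreal (exp (real (k - 1) * \<eta> (n+k) \<omega>)) * indicator {..y} (\<eta> (n+k) \<omega>) \<partial>M)"
  proof (intro nn_integral_cong)
    fix \<omega> assume "\<omega> \<in> space M"
    show "emeasure M {\<omega>'\<in>space M. ?P (restrict (\<lambda>i. \<eta> i \<omega>) ?A) (restrict (\<lambda>i. \<eta> i \<omega>') ?B)}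
        = ennreal (exp (real (k - 1) * \<eta> (n+k) \<omega>)) * indicator {..y} (\<eta> (n+k) \<omega>)"
    proof (cases "\<eta> (n+k) \<omega> \<le> y")
      case True
      have "{\<omega>'\<in>space M. ?P (restrict (\<lambda>i. \<eta> i \<omega>) ?A) (restrict (\<lambda>i. \<eta> i \<omega>') ?B)}
          = {\<omega>'\<in>space M. \<forall>i\<in>?B. \<eta> i \<omega>' < \<eta> (n+k) \<omega>}" using True by auto
      moreover have "emeasure M {\<omega>'\<in>space M. \<forall>i\<in>?B. \<eta> i \<omega>' < \<eta> (n+k) \<omega>} = ennreal (exp (real (card ?B) * \<eta> (n+k) \<omega>))"
        using True y by (intro prod_less) auto
      ultimately show ?thesis using True k by simp
    next
      case False
      then show ?thesis by simp
    qed
  qed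
  also have "\<dots> = ennreal (exp ((real (k - 1) + 1) * y) / (real (k - 1) + 1))"
    using k y by (intro exp_moment) auto
  also have "\<dots> = ennreal (exp (real k * y) / real k)" using k by (simp add: of_nat_diff)
  finally show ?thesis .
qed

lemma block_between:
  assumes k: "k \<ge> 1" and y: "y \<le> 0"
  shows "emeasure M {\<omega>\<in>space M. \<sigma> < \<eta> (n+k) \<omega> \<and> (\<forall>i\<in>{n+1..<n+k}. \<eta> i \<omega> < \<eta> (n+k) \<omega>) \<and> \<eta> (n+k) \<omega> \<le> y}
       = phi k y \<sigma>"
proof (cases "\<sigma> \<le> y")
  case False
  then have e: "{\<omega>\<in>space M. \<sigma> < \<eta> (n+k) \<omega> \<and> (\<forall>i\<in>{n+1..<n+k}. \<eta> i \<omega> < \<eta> (n+k) \<omega>) \<and> \<eta> (n+k) \<omega> \<le> y} = {}"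
    by auto
  show ?thesis unfolding e using False by (simp add: phi_def)
next
  case True
  let ?B = "\<lambda>t. {\<omega>\<in>space M. (\<forall>i\<in>{n+1..<n+k}. \<eta> i \<omega> < \<eta> (n+k) \<omega>) \<and> \<eta> (n+k) \<omega> \<le> t}"
  have "{\<omega>\<in>space M. \<sigma> < \<eta> (n+k) \<omega> \<and> (\<forall>i\<in>{n+1..<n+k}. \<eta> i \<omega> < \<eta> (n+k) \<omega>) \<and> \<eta> (n+k) \<omega> \<le> y} = ?B y - ?B \<sigma>"
    by auto
  moreover have "emeasure M (?B y - ?B \<sigma>) = emeasure M (?B y) - emeasure M (?B \<sigma>)"
    using True k by (intro emeasure_Diff) auto
  moreover have "emeasure M (?B y) = ennreal (exp (real k * y) / real k)" using k y by (rule block)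
  moreover have "emeasure M (?B \<sigma>) = ennreal (exp (real k * \<sigma>) / real k)" using k y True by (intro block) auto
  ultimately show ?thesis using True k
    by (simp add: phi_def ennreal_minus diff_divide_distrib)
qed

lemma h_between:
  assumes i: "i \<ge> 1" and c: "c > 0" and y: "y \<le> 0"
  shows "emeasure M {\<omega>\<in>space M. \<sigma> < \<eta> i \<omega> / c \<and> \<eta> i \<omega> / c \<le> y} = psi c y \<sigma>"
proof (cases "\<sigma> \<le> y")
  case False
  then have e: "{\<omega>\<in>space M. \<sigma> < \<eta> i \<omega> / c \<and> \<eta> i \<omega> / c \<le> y} = {}" by auto
  show ?thesis unfolding e using False by (simp add: psi_def)
next
  case True
  let ?B = "\<lambda>t. {\<omega>\<in>space M. \<eta> i \<omega> \<le> c * t}"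
  have "{\<omega>\<in>space M. \<sigma> < \<eta> i \<omega> / c \<and> \<eta> i \<omega> / c \<le> y} = ?B y - ?B \<sigma>"
    using c by (auto simp: field_simps)
  moreover have "emeasure M (?B y - ?B \<sigma>) = emeasure M (?B y) - emeasure M (?B \<sigma>)"
    using True c i by (intro emeasure_Diff) (auto intro: order_trans mult_left_mono)
  moreover have "emeasure M (?B y) = ennreal (exp (c * y))" using i c y by (intro prob_le) (auto simp: mult_nonneg_nonpos)
  moreover have "emeasure M (?B \<sigma>) = ennreal (exp (c * \<sigma>))" using i c y True by (intro prob_le) (auto simp: mult_nonneg_nonpos)
  ultimately show ?thesis using True c
    by (simp add: psi_def ennreal_minus)
qed

lemma gstep:
  assumes K: "K \<ge> 1" and y: "y \<le> 0"
    and E[measurable]: "Measurable.pred (PiM {1..n} (\<lambda>_. borel)) E"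
    and s[measurable]: "s \<in> borel_measurable (PiM {1..n} (\<lambda>_. borel))"
  shows "emeasure M {\<omega>\<in>space M. E (restrict (\<lambda>i. \<eta> i \<omega>) {1..n}) \<and> s (restrict (\<lambda>i. \<eta> i \<omega>) {1..n}) < \<eta> (n+K) \<omega>
           \<and> (\<forall>i\<in>{n+1..<n+K}. \<eta> i \<omega> < \<eta> (n+K) \<omega>) \<and> \<eta> (n+K) \<omega> \<le> y}
     = (\<integral>\<^sup>+\<omega>. indicator {\<omega>\<in>space M. E (restrict (\<lambda>i. \<eta> i \<omega>) {1..n})} \<omega> * phi K y (s (restrict (\<lambda>i. \<eta> i \<omega>) {1..n})) \<partial>M)"
proof -
  let ?A = "{1..n}" and ?B = "{n+1..n+K}"
  let ?P = "\<lambda>(a::nat\<Rightarrow>real) (b::nat\<Rightarrow>real). E a \<and> s a < b (n+K) \<and> (\<forall>i\<in>{n+1..<n+K}. b i < b (n+K)) \<and> b (n+K) \<le> y"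
  have "emeasure M {\<omega>\<in>space M. E (restrict (\<lambda>i. \<eta> i \<omega>) {1..n}) \<and> s (restrict (\<lambda>i. \<eta> i \<omega>) {1..n}) < \<eta> (n+K) \<omega>
           \<and> (\<forall>i\<in>{n+1..<n+K}. \<eta> i \<omega> < \<eta> (n+K) \<omega>) \<and> \<eta> (n+K) \<omega> \<le> y}
      = emeasure M {\<omega>\<in>space M. ?P (restrict (\<lambda>i. \<eta> i \<omega>) ?A) (restrict (\<lambda>i. \<eta> i \<omega>) ?B)}"
    using K by (intro arg_cong[where f="emeasure M"]) auto
  also have "\<dots> = (\<integral>\<^sup>+\<omega>. emeasure M {\<omega>'\<in>space M. ?P (restrict (\<lambda>i. \<eta> i \<omega>) ?A) (restrict (\<lambda>i. \<eta> i \<omega>') ?B)} \<partial>M)"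
  proof -
    have "Measurable.pred (PiM ?A (\<lambda>_. borel) \<Otimes>\<^sub>M PiM ?B (\<lambda>_. borel)) (\<lambda>p. ?P (fst p) (snd p))"
      by measurable
    then show ?thesis by (intro decomp_gen) auto
  qed
  also have "\<dots> = (\<integral>\<^sup>+\<omega>. indicator {\<omega>\<in>space M. E (restrict (\<lambda>i. \<eta> i \<omega>) {1..n})} \<omega> * phi K y (s (restrict (\<lambda>i. \<eta> i \<omega>) {1..n})) \<partial>M)"
  proof (intro nn_integral_cong)
    fix \<omega> assume \<omega>: "\<omega> \<in> space M"
    show "emeasure M {\<omega>'\<in>space M. ?P (restrict (\<lambda>i. \<eta> i \<omega>) ?A) (restrict (\<lambda>i. \<eta> i \<omega>') ?B)}
        = indicator {\<omega>\<in>space M. E (restrict (\<lambda>i. \<eta> i \<omega>) {1..n})} \<omega> * phi K y (s (restrict (\<lambda>i. \<eta> i \<omega>) {1..n}))"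
    proof (cases "E (restrict (\<lambda>i. \<eta> i \<omega>) {1..n})")
      case True
      have "{\<omega>'\<in>space M. ?P (restrict (\<lambda>i. \<eta> i \<omega>) ?A) (restrict (\<lambda>i. \<eta> i \<omega>') ?B)}
        = {\<omega>'\<in>space M. s (restrict (\<lambda>i. \<eta> i \<omega>) {1..n}) < \<eta> (n+K) \<omega>' \<and> (\<forall>i\<in>{n+1..<n+K}. \<eta> i \<omega>' < \<eta> (n+K) \<omega>') \<and> \<eta> (n+K) \<omega>' \<le> y}"
        using True K by auto
      then show ?thesis using True \<omega> block_between[OF K y] by simp
    next
      case False
      then show ?thesis by simp
    qed
  qed
  finally show ?thesis .
qed

lemma hstep:
  assumes c: "c > 0" and y: "y \<le> 0"
    and E[measurable]: "Measurable.pred (PiM {1..n} (\<lambda>_. borel)) E"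
    and s[measurable]: "s \<in> borel_measurable (PiM {1..n} (\<lambda>_. borel))"
  shows "emeasure M {\<omega>\<in>space M. E (restrict (\<lambda>i. \<eta> i \<omega>) {1..n}) \<and> s (restrict (\<lambda>i. \<eta> i \<omega>) {1..n}) < \<eta> (n+1) \<omega> / c
           \<and> \<eta> (n+1) \<omega> / c \<le> y}
     = (\<integral>\<^sup>+\<omega>. indicator {\<omega>\<in>space M. E (restrict (\<lambda>i. \<eta> i \<omega>) {1..n})} \<omega> * psi c y (s (restrict (\<lambda>i. \<eta> i \<omega>) {1..n})) \<partial>M)"
proof -
  let ?A = "{1..n}" and ?B = "{n+1}"
  let ?P = "\<lambda>(a::nat\<Rightarrow>real) (b::nat\<Rightarrow>real). E a \<and> s a < b (n+1) / c \<and> b (n+1) / c \<le> y"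
  have "emeasure M {\<omega>\<in>space M. E (restrict (\<lambda>i. \<eta> i \<omega>) {1..n}) \<and> s (restrict (\<lambda>i. \<eta> i \<omega>) {1..n}) < \<eta> (n+1) \<omega> / c
           \<and> \<eta> (n+1) \<omega> / c \<le> y}
      = emeasure M {\<omega>\<in>space M. ?P (restrict (\<lambda>i. \<eta> i \<omega>) ?A) (restrict (\<lambda>i. \<eta> i \<omega>) ?B)}"
    by (intro arg_cong[where f="emeasure M"]) auto
  also have "\<dots> = (\<integral>\<^sup>+\<omega>. emeasure M {\<omega>'\<in>space M. ?P (restrict (\<lambda>i. \<eta> i \<omega>) ?A) (restrict (\<lambda>i. \<eta> i \<omega>') ?B)} \<partial>M)"
  proof -
    have "Measurable.pred (PiM ?A (\<lambda>_. borel) \<Otimes>\<^sub>M PiM ?B (\<lambda>_. borel)) (\<lambda>p. ?P (fst p) (snd p))"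
      by measurable
    then show ?thesis by (intro decomp_gen) auto
  qed
  also have "\<dots> = (\<integral>\<^sup>+\<omega>. indicator {\<omega>\<in>space M. E (restrict (\<lambda>i. \<eta> i \<omega>) {1..n})} \<omega> * psi c y (s (restrict (\<lambda>i. \<eta> i \<omega>) {1..n})) \<partial>M)"
  proof (intro nn_integral_cong)
    fix \<omega> assume \<omega>: "\<omega> \<in> space M"
    show "emeasure M {\<omega>'\<in>space M. ?P (restrict (\<lambda>i. \<eta> i \<omega>) ?A) (restrict (\<lambda>i. \<eta> i \<omega>') ?B)}
        = indicator {\<omega>\<in>space M. E (restrict (\<lambda>i. \<eta> i \<omega>) {1..n})} \<omega> * psi c y (s (restrict (\<lambda>i. \<eta> i \<omega>) {1..n}))"
    proof (cases "E (restrict (\<lambda>i. \<eta> i \<omega>) {1..n})")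
      case True
      have "{\<omega>'\<in>space M. ?P (restrict (\<lambda>i. \<eta> i \<omega>) ?A) (restrict (\<lambda>i. \<eta> i \<omega>') ?B)}
        = {\<omega>'\<in>space M. s (restrict (\<lambda>i. \<eta> i \<omega>) {1..n}) < \<eta> (n+1) \<omega>' / c \<and> \<eta> (n+1) \<omega>' / c \<le> y}"
        using True by auto
      then show ?thesis using True \<omega> h_between[of "n+1" c y] c y by simp
    next
      case False
      then show ?thesis by simp
    qed
  qed
  finally show ?thesis .
qed

lemma prod_le:
  assumes B: "finite B" "B \<subseteq> {1..}" and z: "z \<le> 0"
  shows "emeasure M {\<omega>\<in>space M. \<forall>i\<in>B. \<eta> i \<omega> \<le> z} = ennreal (exp (real (card B) * z))"
proof (cases "B = {}")
  case True then show ?thesis by (simp add: emeasure_space_1)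
next
  case False
  have m: "\<And>i. i \<in> B \<Longrightarrow> prob (\<eta> i -` {..z} \<inter> space M) = exp z"
  proof -
    fix i assume "i \<in> B"
    then have i: "i \<ge> 1" using B by auto
    have "emeasure M (\<eta> i -` {..z} \<inter> space M) = ennreal (exp z)"
      using prob_le[OF i z] by (simp add: Int_def conj_commute Collect_conj_eq[symmetric])
    then show "prob (\<eta> i -` {..z} \<inter> space M) = exp z" by (simp add: emeasure_eq_measure)
  qed
  have "{\<omega>\<in>space M. \<forall>i\<in>B. \<eta> i \<omega> \<le> z} = (\<Inter>i\<in>B. \<eta> i -` {..z} \<inter> space M)"
    using False by auto
  moreover have "prob (\<Inter>i\<in>B. \<eta> i -` {..z} \<inter> space M) = (\<Prod>i\<in>B. prob (\<eta> i -` {..z} \<inter> space M))"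
    using False B by (intro indep_varsD[OF indep]) auto
  moreover have "(\<Prod>i\<in>B. prob (\<eta> i -` {..z} \<inter> space M)) = exp (real (card B) * z)"
    using m by (simp add: exp_of_nat_mult)
  ultimately show ?thesis by (simp add: emeasure_eq_measure)
qed

lemma vec_event:
  assumes P: "Measurable.pred (PiM A (\<lambda>_. borel)) P" and A: "A \<subseteq> {1..}"
  shows "{\<omega>\<in>space M. P (restrict (\<lambda>i. \<eta> i \<omega>) A)} \<in> events"
proof -
  have "(\<lambda>\<omega>. restrict (\<lambda>i. \<eta> i \<omega>) A) \<in> measurable M (PiM A (\<lambda>_. borel))"
    using A rv by (intro measurable_restrict) auto
  from measurable_compose[OF this P] show ?thesis by (rule predE)
qed

end

locale recs2 = recs M \<eta> for M :: "'a measure" and \<eta> +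
  fixes d :: nat and j :: "nat \<Rightarrow> nat"
  assumes d1: "d \<ge> 1" and j0: "j 0 = 0" and jmono: "strict_mono_on {0..d} j"
begin

lemma jlt: "m < m' \<Longrightarrow> m' \<le> d \<Longrightarrow> j m < j m'"
  using jmono by (auto intro: strict_mono_onD)

lemma jle: "m \<le> m' \<Longrightarrow> m' \<le> d \<Longrightarrow> j m \<le> j m'"
  using jlt[of m m'] by (cases "m = m'") auto

lemma jpos: "1 \<le> m \<Longrightarrow> m \<le> d \<Longrightarrow> 1 \<le> j m"
  using jlt[of 0 m] j0 by auto

definition kk :: "nat \<Rightarrow> nat" where "kk m = j m - j (m - 1)"

lemma kk_pos: "1 \<le> m \<Longrightarrow> m \<le> d \<Longrightarrow> 1 \<le> kk m"
  using jlt[of "m - 1" m] unfolding kk_def by auto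

lemma jsum: "1 \<le> m \<Longrightarrow> m \<le> d \<Longrightarrow> j (m - 1) + kk m = j m"
  using jlt[of "m - 1" m] unfolding kk_def by auto

definition U :: "nat \<Rightarrow> 'a \<Rightarrow> real" where "U m \<omega> = \<eta> m \<omega> / real (kk m)"

definition Gs where "Gs bnd D = {\<omega>\<in>space M. \<forall>m\<in>{1..D}. is_record \<eta> (j m) \<omega> \<and> \<eta> (j m) \<omega> \<le> bnd m}"
definition Hs where "Hs bnd D = {\<omega>\<in>space M. (\<forall>m\<in>{1..<D}. U m \<omega> \<le> bnd m \<and> U m \<omega> < U (m+1) \<omega>) \<and> U D \<omega> \<le> bnd D}"
definition Ga where "Ga bnd D a = (\<forall>m\<in>{1..D}. (\<forall>i\<in>{1..<j m}. a i < a (j m)) \<and> a (j m) \<le> (bnd m :: real))"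
definition Ha where "Ha bnd D a = ((\<forall>m\<in>{1..<D}. a m / real (kk m) \<le> bnd m \<and> a m / real (kk m) < a (m+1) / real (kk (m+1)))
   \<and> a D / real (kk D) \<le> (bnd D :: real))"

lemma Ga_meas[measurable]: "Measurable.pred (PiM I (\<lambda>_. borel)) (Ga bnd D)"
  unfolding Ga_def by measurable

lemma Ha_meas[measurable]: "Measurable.pred (PiM I (\<lambda>_. borel)) (Ha bnd D)"
  unfolding Ha_def by measurable

lemma Ga_restrict:
  assumes D: "D \<le> d"
  shows "Ga bnd D (restrict (\<lambda>i. \<eta> i \<omega>) {1..j D}) \<longleftrightarrow> (\<forall>m\<in>{1..D}. is_record \<eta> (j m) \<omega> \<and> \<eta> (j m) \<omega> \<le> bnd m)"
proof -
  have *: "\<And>m. m \<in> {1..D} \<Longrightarrow> 1 \<le> j m \<and> j m \<le> j D" using D jle jpos by auto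
  have eq: "((\<forall>i\<in>{1..<j m}. restrict (\<lambda>i. \<eta> i \<omega>) {1..j D} i < restrict (\<lambda>i. \<eta> i \<omega>) {1..j D} (j m))
       \<and> restrict (\<lambda>i. \<eta> i \<omega>) {1..j D} (j m) \<le> bnd m) 
     = ((\<forall>k\<in>{1..<j m}. \<eta> k \<omega> < \<eta> (j m) \<omega>) \<and> \<eta> (j m) \<omega> \<le> bnd m)" if m: "m \<in> {1..D}" for m
    using *[OF m] by auto
  show ?thesis unfolding Ga_def is_record_def
    by (rule ball_cong[OF refl]) (rule eq)
qed

lemma Ha_restrict:
  assumes D: "1 \<le> D"
  shows "Ha bnd D (restrict (\<lambda>i. \<eta> i \<omega>) {1..D}) \<longleftrightarrow> ((\<forall>m\<in>{1..<D}. U m \<omega> \<le> bnd m \<and> U m \<omega> < U (m+1) \<omega>) \<and> U D \<omega> \<le> bnd D)"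
  using D unfolding Ha_def U_def by auto

lemma Gs_eq: "D \<le> d \<Longrightarrow> Gs bnd D = {\<omega>\<in>space M. Ga bnd D (restrict (\<lambda>i. \<eta> i \<omega>) {1..j D})}"
  unfolding Gs_def using Ga_restrict by auto

lemma Hs_eq: "1 \<le> D \<Longrightarrow> Hs bnd D = {\<omega>\<in>space M. Ha bnd D (restrict (\<lambda>i. \<eta> i \<omega>) {1..D})}"
  unfolding Hs_def using Ha_restrict by auto

lemma Gs_ev: "D \<le> d \<Longrightarrow> Gs bnd D \<in> events"
  unfolding Gs_eq by (rule vec_event) auto

lemma Hs_ev: "1 \<le> D \<Longrightarrow> Hs bnd D \<in> events"
  unfolding Hs_eq by (rule vec_event) auto

lemma U_meas: "1 \<le> m \<Longrightarrow> U m \<in> borel_measurable M"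
  unfolding U_def by measurable

lemma AE_U: assumes m: "1 \<le> m" shows "AE \<omega> in M. U m \<omega> \<le> 0"
  using AE_nonpos[OF m] by eventually_elim (auto simp: U_def divide_nonpos_nonneg)

lemma rec_split:
  assumes D: "1 \<le> D" "Suc D \<le> d" and r: "is_record \<eta> (j D) \<omega>"
  shows "is_record \<eta> (j (Suc D)) \<omega> \<longleftrightarrow>
     \<eta> (j D) \<omega> < \<eta> (j (Suc D)) \<omega> \<and> (\<forall>i\<in>{j D+1..<j (Suc D)}. \<eta> i \<omega> < \<eta> (j (Suc D)) \<omega>)"
proof -
  have lt: "j D < j (Suc D)" using jlt[of D "Suc D"] D by auto
  have p: "1 \<le> j D" using jpos[of D] D by auto
  show ?thesis
  proof
    assume a: "is_record \<eta> (j (Suc D)) \<omega>"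
    then show "\<eta> (j D) \<omega> < \<eta> (j (Suc D)) \<omega> \<and> (\<forall>i\<in>{j D+1..<j (Suc D)}. \<eta> i \<omega> < \<eta> (j (Suc D)) \<omega>)"
      using lt p unfolding is_record_def by auto
  next
    assume a: "\<eta> (j D) \<omega> < \<eta> (j (Suc D)) \<omega> \<and> (\<forall>i\<in>{j D+1..<j (Suc D)}. \<eta> i \<omega> < \<eta> (j (Suc D)) \<omega>)"
    show "is_record \<eta> (j (Suc D)) \<omega>" unfolding is_record_def
    proof
      fix i assume i: "i \<in> {1..<j (Suc D)}"
      consider "i < j D" | "i = j D" | "i > j D" by linarith
      then show "\<eta> i \<omega> < \<eta> (j (Suc D)) \<omega>"
      proof cases
        case 1
        then have "\<eta> i \<omega> < \<eta> (j D) \<omega>" using r i unfolding is_record_def by auto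
        then show ?thesis using a by linarith
      next
        case 2 then show ?thesis using a by simp
      next
        case 3 then show ?thesis using a i by auto
      qed
    qed
  qed
qed

definition cG where "cG D = (\<Prod>m\<in>{1..D}. 1 / real (kk m))"
definition cR where "cR D = (\<Prod>m\<in>{1..D}. 1 / real (j m))"
definition Mx where "Mx D \<omega> = Max ((\<lambda>i. \<eta> i \<omega>) ` {1..j D})"

lemma split1: "(\<forall>m\<in>{1..Suc D}. Q m) = ((\<forall>m\<in>{1..D}. Q m) \<and> Q (Suc D))"
proof -
  have "{1..Suc D} = insert (Suc D) {1..D}" by auto
  then show ?thesis by auto
qed

lemma split2: "1 \<le> D \<Longrightarrow> (\<forall>m\<in>{1..<Suc D}. Q m) = ((\<forall>m\<in>{1..<D}. Q m) \<and> Q D)"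
  by (auto simp: less_Suc_eq)

lemma eta_jD_meas: "1 \<le> D \<Longrightarrow> D \<le> d \<Longrightarrow> \<eta> (j D) \<in> borel_measurable M"
  using jpos by (intro rv) auto

lemma g_step:
  assumes D: "1 \<le> D" "Suc D \<le> d" and t: "t \<le> 0" and b: "bnd (Suc D) \<le> 0"
  shows "emeasure M (Gs bnd (Suc D) \<inter> {\<omega>\<in>space M. \<eta> (j (Suc D)) \<omega> \<le> t})
    = (\<integral>\<^sup>+\<omega>. indicator (Gs bnd D) \<omega> * phi (kk (Suc D)) (min (bnd (Suc D)) t) (\<eta> (j D) \<omega>) \<partial>M)"
proof -
  define K where "K = kk (Suc D)"
  define y where "y = min (bnd (Suc D)) t"
  define n where "n = j D"
  have K: "1 \<le> K" using kk_pos[of "Suc D"] D by (simp add: K_def)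
  have nK: "n + K = j (Suc D)" using jsum[of "Suc D"] D by (simp add: K_def n_def)
  have y: "y \<le> 0" using t by (simp add: y_def)
  have n1: "1 \<le> n" using jpos[of D] D by (simp add: n_def)
  have nK': "j D + K = j (Suc D)" using nK by (simp add: n_def)
  have "Gs bnd (Suc D) \<inter> {\<omega>\<in>space M. \<eta> (j (Suc D)) \<omega> \<le> t}
    = {\<omega>\<in>space M. Ga bnd D (restrict (\<lambda>i. \<eta> i \<omega>) {1..n}) \<and> restrict (\<lambda>i. \<eta> i \<omega>) {1..n} n < \<eta> (n+K) \<omega>
           \<and> (\<forall>i\<in>{n+1..<n+K}. \<eta> i \<omega> < \<eta> (n+K) \<omega>) \<and> \<eta> (n+K) \<omega> \<le> y}"
  proof (intro set_eqI iffI)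
    fix \<omega> assume a: "\<omega> \<in> Gs bnd (Suc D) \<inter> {\<omega>\<in>space M. \<eta> (j (Suc D)) \<omega> \<le> t}"
    then have sp: "\<omega> \<in> space M" and all: "\<forall>m\<in>{1..D}. is_record \<eta> (j m) \<omega> \<and> \<eta> (j m) \<omega> \<le> bnd m"
      and r: "is_record \<eta> (j (Suc D)) \<omega>" and b1: "\<eta> (j (Suc D)) \<omega> \<le> bnd (Suc D)"
      and t1: "\<eta> (j (Suc D)) \<omega> \<le> t"
      unfolding Gs_def split1 by auto
    have rD: "is_record \<eta> (j D) \<omega>" using all D by auto
    show "\<omega> \<in> {\<omega>\<in>space M. Ga bnd D (restrict (\<lambda>i. \<eta> i \<omega>) {1..n}) \<and> restrict (\<lambda>i. \<eta> i \<omega>) {1..n} n < \<eta> (n+K) \<omega>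
           \<and> (\<forall>i\<in>{n+1..<n+K}. \<eta> i \<omega> < \<eta> (n+K) \<omega>) \<and> \<eta> (n+K) \<omega> \<le> y}"
      using sp all r b1 t1 rec_split[OF D rD] Ga_restrict[of D bnd \<omega>] D n1
      unfolding y_def n_def nK' by auto
  next
    fix \<omega> assume a: "\<omega> \<in> {\<omega>\<in>space M. Ga bnd D (restrict (\<lambda>i. \<eta> i \<omega>) {1..n}) \<and> restrict (\<lambda>i. \<eta> i \<omega>) {1..n} n < \<eta> (n+K) \<omega>
           \<and> (\<forall>i\<in>{n+1..<n+K}. \<eta> i \<omega> < \<eta> (n+K) \<omega>) \<and> \<eta> (n+K) \<omega> \<le> y}"
    then have sp: "\<omega> \<in> space M" and all: "\<forall>m\<in>{1..D}. is_record \<eta> (j m) \<omega> \<and> \<eta> (j m) \<omega> \<le> bnd m"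
      and c2: "\<eta> (j D) \<omega> < \<eta> (j (Suc D)) \<omega>" and c3: "\<forall>i\<in>{j D+1..<j (Suc D)}. \<eta> i \<omega> < \<eta> (j (Suc D)) \<omega>"
      and c4: "\<eta> (j (Suc D)) \<omega> \<le> y"
      using Ga_restrict[of D bnd \<omega>] D n1 unfolding n_def nK' by auto
    have rD: "is_record \<eta> (j D) \<omega>" using all D by auto
    show "\<omega> \<in> Gs bnd (Suc D) \<inter> {\<omega>\<in>space M. \<eta> (j (Suc D)) \<omega> \<le> t}"
      using sp all c2 c3 c4 rec_split[OF D rD] unfolding Gs_def split1 y_def by auto
  qed
  then have "emeasure M (Gs bnd (Suc D) \<inter> {\<omega>\<in>space M. \<eta> (j (Suc D)) \<omega> \<le> t})
    = emeasure M {\<omega>\<in>space M. Ga bnd D (restrict (\<lambda>i. \<eta> i \<omega>) {1..n}) \<and> restrict (\<lambda>i. \<eta> i \<omega>) {1..n} n < \<eta> (n+K) \<omega>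
           \<and> (\<forall>i\<in>{n+1..<n+K}. \<eta> i \<omega> < \<eta> (n+K) \<omega>) \<and> \<eta> (n+K) \<omega> \<le> y}" by simp
  also have "\<dots> = (\<integral>\<^sup>+\<omega>. indicator {\<omega>\<in>space M. Ga bnd D (restrict (\<lambda>i. \<eta> i \<omega>) {1..n})} \<omega>
       * phi K y (restrict (\<lambda>i. \<eta> i \<omega>) {1..n} n) \<partial>M)"
    by (rule gstep[OF K y, where E="Ga bnd D" and s="\<lambda>a. a n"]) measurable
  also have "\<dots> = (\<integral>\<^sup>+\<omega>. indicator (Gs bnd D) \<omega> * phi K y (\<eta> (j D) \<omega>) \<partial>M)"
    using D n1 by (intro nn_integral_cong) (simp add: Gs_eq n_def)
  finally show ?thesis by (simp add: K_def y_def)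
qed

lemma inv_main:
  assumes bnd: "\<And>m. m \<in> {1..d} \<Longrightarrow> bnd m \<le> 0"
  assumes D: "1 \<le> D"
  shows "D \<le> d \<Longrightarrow> t \<le> 0 \<Longrightarrow> emeasure M (Gs bnd D \<inter> {\<omega>\<in>space M. \<eta> (j D) \<omega> \<le> t})
     = ennreal (cG D) * emeasure M (Hs bnd D \<inter> {\<omega>\<in>space M. U D \<omega> \<le> t})"
  using D
proof (induction D arbitrary: t rule: nat_induct_at_least)
  case base
  define y where "y = min (bnd 1) t"
  have j1: "1 \<le> j 1" using jpos[of 1] d1 by simp
  have k1: "kk 1 = j 1" by (simp add: kk_def j0)
  have y: "y \<le> 0" using base by (simp add: y_def)
  have "Gs bnd 1 \<inter> {\<omega>\<in>space M. \<eta> (j 1) \<omega> \<le> t} = {\<omega>\<in>space M. (\<forall>i\<in>{0+1..<0+j 1}. \<eta> i \<omega> < \<eta> (0+j 1) \<omega>) \<and> \<eta> (0+j 1) \<omega> \<le> y}"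
    by (auto simp: Gs_def is_record_def y_def)
  then have L: "emeasure M (Gs bnd 1 \<inter> {\<omega>\<in>space M. \<eta> (j 1) \<omega> \<le> t}) = ennreal (exp (real (j 1) * y) / real (j 1))"
    using block[OF j1 y, of 0] by simp
  have mn: "real (j 1) * min (bnd 1) t = min (real (j 1) * bnd 1) (real (j 1) * t)"
    using j1 by (cases "bnd 1 \<le> t") (auto simp: min_def mult_left_mono)
  have "Hs bnd 1 \<inter> {\<omega>\<in>space M. U 1 \<omega> \<le> t} = {\<omega>\<in>space M. \<eta> 1 \<omega> \<le> real (kk 1) * y}"
    using j1 k1 mn by (auto simp: Hs_def U_def y_def pos_divide_le_eq mult.commute)
  then have R: "emeasure M (Hs bnd 1 \<inter> {\<omega>\<in>space M. U 1 \<omega> \<le> t}) = ennreal (exp (real (j 1) * y))"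
    using prob_le[of 1 "real (kk 1) * y"] y k1 by (simp add: mult_nonneg_nonpos)
  have c: "cG 1 = 1 / real (j 1)" by (simp add: cG_def kk_def j0)
  show ?case unfolding L R c y_def[symmetric]
    by (simp add: ennreal_mult'[symmetric])
next
  case (Suc D)
  define K where "K = kk (Suc D)"
  define y where "y = min (bnd (Suc D)) t"
  have K: "1 \<le> K" using kk_pos[of "Suc D"] Suc by (simp add: K_def)
  have y: "y \<le> 0" using Suc by (simp add: y_def)
  have b: "bnd (Suc D) \<le> 0" using bnd Suc by auto
  have Dd: "D \<le> d" using Suc by simp
  have meas1[measurable]: "\<eta> (j D) \<in> borel_measurable M" using eta_jD_meas Suc by auto
  have meas2[measurable]: "U D \<in> borel_measurable M" using U_meas Suc by auto
  have ev1[measurable]: "Gs bnd D \<in> events" using Gs_ev Dd by auto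
  have ev2[measurable]: "Hs bnd D \<in> events" using Hs_ev Suc by auto
  have cpos: "0 \<le> cG D" unfolding cG_def by (intro prod_nonneg) auto
  have SLeq: "SL M 1 (Gs bnd D) (\<eta> (j D)) = SL M (cG D) (Hs bnd D) (U D)"
  proof (rule SL_eqI)
    show "AE \<omega> in M. \<eta> (j D) \<omega> \<le> 0" using AE_nonpos jpos Suc by auto
    show "AE \<omega> in M. U D \<omega> \<le> 0" using AE_U Suc by auto
    fix t' :: real assume "t' \<le> 0"
    then show "ennreal 1 * emeasure M (Gs bnd D \<inter> {\<omega> \<in> space M. \<eta> (j D) \<omega> \<le> t'}) =
          ennreal (cG D) * emeasure M (Hs bnd D \<inter> {\<omega> \<in> space M. U D \<omega> \<le> t'})"
      using Suc.IH[OF Dd] by simp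
  qed (use cpos in auto)
  have "emeasure M (Gs bnd (Suc D) \<inter> {\<omega>\<in>space M. \<eta> (j (Suc D)) \<omega> \<le> t})
     = (\<integral>\<^sup>+\<omega>. indicator (Gs bnd D) \<omega> * phi K y (\<eta> (j D) \<omega>) \<partial>M)"
    unfolding K_def y_def using Suc b by (intro g_step) auto
  also have "\<dots> = (\<integral>\<^sup>+s. phi K y s \<partial>SL M 1 (Gs bnd D) (\<eta> (j D)))"
    by (subst SL_integral) auto
  also have "\<dots> = (\<integral>\<^sup>+s. phi K y s \<partial>SL M (cG D) (Hs bnd D) (U D))" by (simp add: SLeq)
  also have "\<dots> = (\<integral>\<^sup>+\<omega>. ennreal (cG D) * indicator (Hs bnd D) \<omega> * phi K y (U D \<omega>) \<partial>M)"
    by (subst SL_integral) auto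
  also have "\<dots> = (\<integral>\<^sup>+\<omega>. (ennreal (cG D) * ennreal (1 / real K)) * (indicator (Hs bnd D) \<omega> * psi (real K) y (U D \<omega>)) \<partial>M)"
    by (intro nn_integral_cong) (simp add: phi_psi[OF K] ac_simps)
  also have "\<dots> = (ennreal (cG D) * ennreal (1 / real K)) * (\<integral>\<^sup>+\<omega>. indicator (Hs bnd D) \<omega> * psi (real K) y (U D \<omega>) \<partial>M)"
    by (rule nn_integral_cmult) measurable
  also have "(\<integral>\<^sup>+\<omega>. indicator (Hs bnd D) \<omega> * psi (real K) y (U D \<omega>) \<partial>M)
      = emeasure M (Hs bnd (Suc D) \<inter> {\<omega>\<in>space M. U (Suc D) \<omega> \<le> t})"
  proof -
    have Kpos: "real K > 0" using K by simp
    have "(\<integral>\<^sup>+\<omega>. indicator (Hs bnd D) \<omega> * psi (real K) y (U D \<omega>) \<partial>M)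
      = (\<integral>\<^sup>+\<omega>. indicator {\<omega>\<in>space M. Ha bnd D (restrict (\<lambda>i. \<eta> i \<omega>) {1..D})} \<omega>
          * psi (real K) y (restrict (\<lambda>i. \<eta> i \<omega>) {1..D} D / real (kk D)) \<partial>M)"
      using Suc by (intro nn_integral_cong) (simp add: Hs_eq U_def)
    also have "\<dots> = emeasure M {\<omega>\<in>space M. Ha bnd D (restrict (\<lambda>i. \<eta> i \<omega>) {1..D}) \<and>
        restrict (\<lambda>i. \<eta> i \<omega>) {1..D} D / real (kk D) < \<eta> (D+1) \<omega> / real K \<and> \<eta> (D+1) \<omega> / real K \<le> y}"
      by (rule hstep[OF Kpos y, where E="Ha bnd D" and s="\<lambda>a. a D / real (kk D)", symmetric]) measurable
    also have "{\<omega>\<in>space M. Ha bnd D (restrict (\<lambda>i. \<eta> i \<omega>) {1..D}) \<and>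
        restrict (\<lambda>i. \<eta> i \<omega>) {1..D} D / real (kk D) < \<eta> (D+1) \<omega> / real K \<and> \<eta> (D+1) \<omega> / real K \<le> y}
      = Hs bnd (Suc D) \<inter> {\<omega>\<in>space M. U (Suc D) \<omega> \<le> t}"
      using Suc Ha_restrict[of D bnd] unfolding Hs_def split2[OF Suc(1)]
      by (auto simp: U_def K_def y_def)
    finally show ?thesis .
  qed
  also have "ennreal (cG D) * ennreal (1 / real K) = ennreal (cG (Suc D))"
    using cpos by (simp add: cG_def K_def ennreal_mult'[symmetric] mult.commute)
  finally show ?case .
qed

end


context recs2
begin

lemma Max_meas[measurable]: "finite I \<Longrightarrow> (\<lambda>a::nat\<Rightarrow>real. Max (a ` I)) \<in> borel_measurable (PiM J (\<lambda>_. borel))"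
  using borel_measurable_Max[of I "\<lambda>i a. a i" "PiM J (\<lambda>_. borel)"] by simp

lemma Mx_meas: "1 \<le> D \<Longrightarrow> D \<le> d \<Longrightarrow> Mx D \<in> borel_measurable M"
  unfolding Mx_def by measurable

lemma Mx_le: assumes "1 \<le> D" "D \<le> d" shows "Mx D \<omega> \<le> t \<longleftrightarrow> (\<forall>i\<in>{1..j D}. \<eta> i \<omega> \<le> t)"
proof -
  have "{1..j D} \<noteq> {}" using jpos assms by auto
  then show ?thesis unfolding Mx_def by (subst Max_le_iff) auto
qed

lemma max_block_eq:
  assumes n1: "1 \<le> n" and K: "1 \<le> K"
  shows "{\<omega>\<in>space M. (\<lambda>_. True) (restrict (\<lambda>i. \<eta> i \<omega>) {1..n}) \<and>
        Max (restrict (\<lambda>i. \<eta> i \<omega>) {1..n} ` {1..n}) < \<eta> (n+K) \<omega>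
           \<and> (\<forall>i\<in>{n+1..<n+K}. \<eta> i \<omega> < \<eta> (n+K) \<omega>) \<and> \<eta> (n+K) \<omega> \<le> t}
      = {\<omega>\<in>space M. (\<forall>i\<in>{0+1..<0+(n+K)}. \<eta> i \<omega> < \<eta> (0+(n+K)) \<omega>) \<and> \<eta> (0+(n+K)) \<omega> \<le> t}"
proof -
  have ne: "{1..n} \<noteq> {}" using n1 by auto
  have F1: "Max (restrict (\<lambda>i. \<eta> i \<omega>) {1..n} ` {1..n}) < z \<longleftrightarrow> (\<forall>i\<in>{1..n}. \<eta> i \<omega> < z)" for \<omega> z
    using ne by (subst Max_less_iff) auto
  have F2: "(\<forall>i\<in>{1..n}. \<eta> i \<omega> < z) \<and> (\<forall>i\<in>{n+1..<n+K}. \<eta> i \<omega> < z) \<longleftrightarrow> (\<forall>i\<in>{1..<n+K}. \<eta> i \<omega> < z)" for \<omega> z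
  proof
    assume a: "(\<forall>i\<in>{1..n}. \<eta> i \<omega> < z) \<and> (\<forall>i\<in>{n+1..<n+K}. \<eta> i \<omega> < z)"
    show "\<forall>i\<in>{1..<n+K}. \<eta> i \<omega> < z"
    proof
      fix i assume i: "i \<in> {1..<n+K}"
      show "\<eta> i \<omega> < z"
      proof (cases "i \<le> n")
        case True then show ?thesis using a i by auto
      next
        case False then show ?thesis using a i by auto
      qed
    qed
  next
    assume a: "\<forall>i\<in>{1..<n+K}. \<eta> i \<omega> < z"
    then show "(\<forall>i\<in>{1..n}. \<eta> i \<omega> < z) \<and> (\<forall>i\<in>{n+1..<n+K}. \<eta> i \<omega> < z)"
      using K by auto
  qed
  show ?thesis
  proof (rule Collect_cong)
    fix \<omega>
    show "(\<omega> \<in> space M \<and> (\<lambda>_. True) (restrict (\<lambda>i. \<eta> i \<omega>) {1..n}) \<and>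
        Max (restrict (\<lambda>i. \<eta> i \<omega>) {1..n} ` {1..n}) < \<eta> (n+K) \<omega>
           \<and> (\<forall>i\<in>{n+1..<n+K}. \<eta> i \<omega> < \<eta> (n+K) \<omega>) \<and> \<eta> (n+K) \<omega> \<le> t)
       = (\<omega> \<in> space M \<and> (\<forall>i\<in>{0+1..<0+(n+K)}. \<eta> i \<omega> < \<eta> (0+(n+K)) \<omega>) \<and> \<eta> (0+(n+K)) \<omega> \<le> t)"
      using F1[of \<omega> "\<eta> (n+K) \<omega>"] F2[of \<omega> "\<eta> (n+K) \<omega>"] by (simp, (blast)?)
  qed
qed

lemma inv_rec:
  assumes D: "1 \<le> D"
  shows "D \<le> d \<Longrightarrow> t \<le> 0 \<Longrightarrow> emeasure M (Gs (\<lambda>_. 0) D \<inter> {\<omega>\<in>space M. \<eta> (j D) \<omega> \<le> t})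
     = ennreal (cR D * exp (real (j D) * t))"
  using D
proof (induction D arbitrary: t rule: nat_induct_at_least)
  case base
  have j1: "1 \<le> j 1" using jpos[of 1] d1 by simp
  have "Gs (\<lambda>_. 0) 1 \<inter> {\<omega>\<in>space M. \<eta> (j 1) \<omega> \<le> t} = {\<omega>\<in>space M. (\<forall>i\<in>{0+1..<0+j 1}. \<eta> i \<omega> < \<eta> (0+j 1) \<omega>) \<and> \<eta> (0+j 1) \<omega> \<le> t}"
    using base by (auto simp: Gs_def is_record_def)
  then have L: "emeasure M (Gs (\<lambda>_. 0) 1 \<inter> {\<omega>\<in>space M. \<eta> (j 1) \<omega> \<le> t}) = ennreal (exp (real (j 1) * t) / real (j 1))"
    using block[OF j1 base(2), of 0] by simp
  show ?case unfolding L by (simp add: cR_def)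
next
  case (Suc D)
  define K where "K = kk (Suc D)"
  define n where "n = j D"
  have K: "1 \<le> K" using kk_pos[of "Suc D"] Suc by (simp add: K_def)
  have Dd: "D \<le> d" using Suc by simp
  have n1: "1 \<le> n" using jpos[of D] Suc by (simp add: n_def)
  have nK: "n + K = j (Suc D)" using jsum[of "Suc D"] Suc by (simp add: K_def n_def)
  have jS: "1 \<le> j (Suc D)" using jpos[of "Suc D"] Suc by simp
  have meas1[measurable]: "\<eta> (j D) \<in> borel_measurable M" using eta_jD_meas Suc by auto
  have meas2[measurable]: "Mx D \<in> borel_measurable M" using Mx_meas Suc by auto
  have ev1[measurable]: "Gs (\<lambda>_. 0) D \<in> events" using Gs_ev Dd by auto
  have cpos: "0 \<le> cR D" unfolding cR_def by (intro prod_nonneg) auto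
  have SLeq: "SL M 1 (Gs (\<lambda>_. 0) D) (\<eta> (j D)) = SL M (cR D) (space M) (Mx D)"
  proof (rule SL_eqI)
    show "AE \<omega> in M. \<eta> (j D) \<omega> \<le> 0" using AE_nonpos jpos Suc by auto
    have "AE \<omega> in M. \<forall>i\<in>{1..j D}. \<eta> i \<omega> \<le> 0" by (intro AE_finite_allI AE_nonpos) auto
    then show "AE \<omega> in M. Mx D \<omega> \<le> 0" by eventually_elim (use Mx_le[of D] Suc in auto)
    fix t' :: real assume t': "t' \<le> 0"
    have "space M \<inter> {\<omega> \<in> space M. Mx D \<omega> \<le> t'} = {\<omega>\<in>space M. \<forall>i\<in>{1..j D}. \<eta> i \<omega> \<le> t'}"
      using Mx_le[of D] Suc by auto
    then have "emeasure M (space M \<inter> {\<omega> \<in> space M. Mx D \<omega> \<le> t'}) = ennreal (exp (real (j D) * t'))"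
      using prod_le[of "{1..j D}" t'] t' by simp
    then show "ennreal 1 * emeasure M (Gs (\<lambda>_. 0) D \<inter> {\<omega> \<in> space M. \<eta> (j D) \<omega> \<le> t'}) =
          ennreal (cR D) * emeasure M (space M \<inter> {\<omega> \<in> space M. Mx D \<omega> \<le> t'})"
      using Suc.IH[OF Dd t'] cpos by (simp add: ennreal_mult'[symmetric])
  qed (use cpos in auto)
  have "emeasure M (Gs (\<lambda>_. 0) (Suc D) \<inter> {\<omega>\<in>space M. \<eta> (j (Suc D)) \<omega> \<le> t})
     = (\<integral>\<^sup>+\<omega>. indicator (Gs (\<lambda>_. 0) D) \<omega> * phi K (min 0 t) (\<eta> (j D) \<omega>) \<partial>M)"
    unfolding K_def using Suc by (intro g_step) auto
  also have "\<dots> = (\<integral>\<^sup>+s. phi K t s \<partial>SL M 1 (Gs (\<lambda>_. 0) D) (\<eta> (j D)))"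
    using Suc by (subst SL_integral) (auto simp: min_def)
  also have "\<dots> = (\<integral>\<^sup>+s. phi K t s \<partial>SL M (cR D) (space M) (Mx D))" by (simp add: SLeq)
  also have "\<dots> = (\<integral>\<^sup>+\<omega>. ennreal (cR D) * indicator (space M) \<omega> * phi K t (Mx D \<omega>) \<partial>M)"
    by (subst SL_integral) auto
  also have "\<dots> = (\<integral>\<^sup>+\<omega>. ennreal (cR D) * phi K t (Mx D \<omega>) \<partial>M)"
    by (intro nn_integral_cong) simp
  also have "\<dots> = ennreal (cR D) * (\<integral>\<^sup>+\<omega>. phi K t (Mx D \<omega>) \<partial>M)"
    by (rule nn_integral_cmult) measurable
  also have "(\<integral>\<^sup>+\<omega>. phi K t (Mx D \<omega>) \<partial>M) = ennreal (exp (real (j (Suc D)) * t) / real (j (Suc D)))"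
  proof -
    have mx: "Max (restrict (\<lambda>i. \<eta> i \<omega>) {1..n} ` {1..n}) = Mx D \<omega>" for \<omega>
      unfolding Mx_def n_def by (intro arg_cong[where f=Max] image_cong) auto
    have "(\<integral>\<^sup>+\<omega>. phi K t (Mx D \<omega>) \<partial>M)
      = (\<integral>\<^sup>+\<omega>. indicator {\<omega>\<in>space M. (\<lambda>_. True) (restrict (\<lambda>i. \<eta> i \<omega>) {1..n})} \<omega>
          * phi K t (Max (restrict (\<lambda>i. \<eta> i \<omega>) {1..n} ` {1..n})) \<partial>M)"
      by (intro nn_integral_cong) (simp add: Mx_def n_def)
    also have "\<dots> = emeasure M {\<omega>\<in>space M. (\<lambda>_. True) (restrict (\<lambda>i. \<eta> i \<omega>) {1..n}) \<and>
        Max (restrict (\<lambda>i. \<eta> i \<omega>) {1..n} ` {1..n}) < \<eta> (n+K) \<omega>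
           \<and> (\<forall>i\<in>{n+1..<n+K}. \<eta> i \<omega> < \<eta> (n+K) \<omega>) \<and> \<eta> (n+K) \<omega> \<le> t}"
      by (rule gstep[OF K Suc(4), where E="\<lambda>_. True" and s="\<lambda>a. Max (a ` {1..n})", symmetric]) measurable
    also have "{\<omega>\<in>space M. (\<lambda>_. True) (restrict (\<lambda>i. \<eta> i \<omega>) {1..n}) \<and>
        Max (restrict (\<lambda>i. \<eta> i \<omega>) {1..n} ` {1..n}) < \<eta> (n+K) \<omega>
           \<and> (\<forall>i\<in>{n+1..<n+K}. \<eta> i \<omega> < \<eta> (n+K) \<omega>) \<and> \<eta> (n+K) \<omega> \<le> t}
      = {\<omega>\<in>space M. (\<forall>i\<in>{0+1..<0+(n+K)}. \<eta> i \<omega> < \<eta> (0+(n+K)) \<omega>) \<and> \<eta> (0+(n+K)) \<omega> \<le> t}"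
      unfolding nK[symmetric] by (rule max_block_eq[OF n1 K])
    also have "emeasure M {\<omega>\<in>space M. (\<forall>i\<in>{0+1..<0+(n+K)}. \<eta> i \<omega> < \<eta> (0+(n+K)) \<omega>) \<and> \<eta> (0+(n+K)) \<omega> \<le> t}
       = ennreal (exp (real (n+K) * t) / real (n+K))"
      by (rule block[OF _ Suc(4)]) (use K in simp)
    also have "\<dots> = ennreal (exp (real (j (Suc D)) * t) / real (j (Suc D)))" by (simp only: nK)
    finally show ?thesis .
  qed
  also have "ennreal (cR D) * ennreal (exp (real (j (Suc D)) * t) / real (j (Suc D)))
     = ennreal (cR (Suc D) * exp (real (j (Suc D)) * t))"
    using cpos by (simp add: cR_def ennreal_mult'[symmetric])
  finally show ?case .
qed

end

theorem lemma6:
  fixes M :: "'a measure" and \<eta> :: "nat \<Rightarrow> 'a \<Rightarrow> real"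
    and d :: nat and j :: "nat \<Rightarrow> nat" and x :: "nat \<Rightarrow> real"
  assumes "prob_space M"
    and rv: "\<And>i. i \<ge> 1 \<Longrightarrow> \<eta> i \<in> borel_measurable M"
    and indep: "prob_space.indep_vars M (\<lambda>_. borel) \<eta> {1..}"
    and distr: "\<And>i t. i \<ge> 1 \<Longrightarrow> t \<le> 0 \<Longrightarrow> measure M {\<omega> \<in> space M. \<eta> i \<omega> \<le> t} = exp t"
    and d: "d \<ge> 1"
    and j0: "j 0 = 0"
    and jmono: "strict_mono_on {0..d} j"
    and x: "\<And>m. m \<in> {1..d} \<Longrightarrow> x m \<le> 0"
  shows "cond_prob M (\<lambda>\<omega>. \<forall>m\<in>{1..d}. \<eta> (j m) \<omega> \<le> x m)
                     (\<lambda>\<omega>. \<forall>m\<in>{1..d}. is_record \<eta> (j m) \<omega>)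
       = (\<Prod>m=2..d. real (j m)) / (\<Prod>m=2..d. real (j m - j (m - 1)))
         * measure M {\<omega> \<in> space M.
              (\<forall>m\<in>{1..<d}. \<eta> m \<omega> / real (j m - j (m - 1)) \<le> x m
                 \<and> real (j (m + 1) - j m) * \<eta> m \<omega> / real (j m - j (m - 1)) < \<eta> (m + 1) \<omega>)
              \<and> \<eta> d \<omega> / real (j d - j (d - 1)) \<le> x d}"
proof -
  interpret recs2 M \<eta> d j
    by (intro recs2.intro recs.intro recs_axioms.intro recs2_axioms.intro) (use assms in auto)
  have jd: "1 \<le> j d" using jpos d by auto
  have mjd: "\<eta> (j d) \<in> borel_measurable M" using rv jd by auto
  have xd: "x d \<le> 0" using x d by auto
  have num_set: "{\<omega>\<in>space M. (\<forall>m\<in>{1..d}. \<eta> (j m) \<omega> \<le> x m) \<and> (\<forall>m\<in>{1..d}. is_record \<eta> (j m) \<omega>)}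
      = Gs x d \<inter> {\<omega>\<in>space M. \<eta> (j d) \<omega> \<le> 0}"
    using xd d by (auto simp: Gs_def intro: order_trans)
  have hs: "Hs x d \<inter> {\<omega>\<in>space M. U d \<omega> \<le> 0} = Hs x d"
    using xd by (auto simp: Hs_def intro: order_trans)
  have cGpos: "0 \<le> cG d" unfolding cG_def by (intro prod_nonneg) auto
  have cRpos: "0 \<le> cR d" unfolding cR_def by (intro prod_nonneg) auto
  have num: "measure M {\<omega>\<in>space M. (\<forall>m\<in>{1..d}. \<eta> (j m) \<omega> \<le> x m) \<and> (\<forall>m\<in>{1..d}. is_record \<eta> (j m) \<omega>)}
     = cG d * measure M (Hs x d)"
  proof -
    have "emeasure M (Gs x d \<inter> {\<omega>\<in>space M. \<eta> (j d) \<omega> \<le> 0}) = ennreal (cG d) * emeasure M (Hs x d)"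
      using inv_main[of x d 0] x d hs by auto
    then have "ennreal (measure M (Gs x d \<inter> {\<omega>\<in>space M. \<eta> (j d) \<omega> \<le> 0})) = ennreal (cG d * measure M (Hs x d))"
      using cGpos by (simp add: emeasure_eq_measure ennreal_mult'')
    then show ?thesis unfolding num_set using cGpos by (subst (asm) ennreal_inj) auto
  qed
  have den: "measure M {\<omega>\<in>space M. \<forall>m\<in>{1..d}. is_record \<eta> (j m) \<omega>} = cR d"
  proof -
    have ev: "{\<omega>\<in>space M. \<forall>m\<in>{1..d}. is_record \<eta> (j m) \<omega>} \<in> events"
    proof -
      have "{\<omega>\<in>space M. \<forall>m\<in>{1..d}. is_record \<eta> (j m) \<omega>}
          = {\<omega>\<in>space M. (\<lambda>a. \<forall>m\<in>{1..d}. \<forall>i\<in>{1..<j m}. a i < a (j m)) (restrict (\<lambda>i. \<eta> i \<omega>) {1..j d})}"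
      proof (intro Collect_cong conj_cong refl)
        fix \<omega>
        have *: "\<And>m. m \<in> {1..d} \<Longrightarrow> 1 \<le> j m \<and> j m \<le> j d" using jle jpos by auto
        have eq: "(\<forall>k\<in>{1..<j m}. \<eta> k \<omega> < \<eta> (j m) \<omega>) =
           (\<forall>i\<in>{1..<j m}. restrict (\<lambda>i. \<eta> i \<omega>) {1..j d} i < restrict (\<lambda>i. \<eta> i \<omega>) {1..j d} (j m))"
          if m: "m \<in> {1..d}" for m
          using *[OF m] by auto
        show "(\<forall>m\<in>{1..d}. is_record \<eta> (j m) \<omega>) =
          (\<lambda>a. \<forall>m\<in>{1..d}. \<forall>i\<in>{1..<j m}. a i < a (j m)) (restrict (\<lambda>i. \<eta> i \<omega>) {1..j d})"
          unfolding is_record_def by (rule ball_cong[OF refl], rule eq)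
      qed
      also have "\<dots> \<in> events" by (rule vec_event) auto
      finally show ?thesis .
    qed
    have "measure M {\<omega>\<in>space M. \<forall>m\<in>{1..d}. is_record \<eta> (j m) \<omega>}
        = measure M (Gs (\<lambda>_. 0) d \<inter> {\<omega>\<in>space M. \<eta> (j d) \<omega> \<le> 0})"
    proof (rule measure_eq_AE)
      have "AE \<omega> in M. \<forall>m\<in>{1..d}. \<eta> (j m) \<omega> \<le> 0"
        using jpos by (intro AE_finite_allI AE_nonpos) auto
      then show "AE \<omega> in M. (\<omega> \<in> {\<omega>\<in>space M. \<forall>m\<in>{1..d}. is_record \<eta> (j m) \<omega>})
          = (\<omega> \<in> Gs (\<lambda>_. 0) d \<inter> {\<omega>\<in>space M. \<eta> (j d) \<omega> \<le> 0})"
        by eventually_elim (use d in \<open>auto simp: Gs_def\<close>)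
      show "{\<omega>\<in>space M. \<forall>m\<in>{1..d}. is_record \<eta> (j m) \<omega>} \<in> events" by (rule ev)
      show "Gs (\<lambda>_. 0) d \<inter> {\<omega>\<in>space M. \<eta> (j d) \<omega> \<le> 0} \<in> events"
        using Gs_ev[of d] mjd by auto
    qed
    also have "\<dots> = cR d"
      using inv_rec[of d 0] d cRpos by (simp add: emeasure_eq_measure)
    finally show ?thesis .
  qed
  have rhs_set: "{\<omega> \<in> space M.
              (\<forall>m\<in>{1..<d}. \<eta> m \<omega> / real (j m - j (m - 1)) \<le> x m
                 \<and> real (j (m + 1) - j m) * \<eta> m \<omega> / real (j m - j (m - 1)) < \<eta> (m + 1) \<omega>)
              \<and> \<eta> d \<omega> / real (j d - j (d - 1)) \<le> x d} = Hs x d"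
  proof -
    have iff: "(\<eta> m \<omega> / real (j m - j (m - 1)) \<le> x m
                 \<and> real (j (m + 1) - j m) * \<eta> m \<omega> / real (j m - j (m - 1)) < \<eta> (m + 1) \<omega>)
       \<longleftrightarrow> (U m \<omega> \<le> x m \<and> U m \<omega> < U (m+1) \<omega>)"
      if m: "m \<in> {1..<d}" for m \<omega>
    proof -
      have k1: "1 \<le> kk (m+1)" using kk_pos[of "m+1"] m by auto
      have a: "real (j (m + 1) - j m) * \<eta> m \<omega> / real (j m - j (m - 1)) = real (kk (m+1)) * U m \<omega>"
        by (simp add: U_def kk_def)
      have b: "\<eta> m \<omega> / real (j m - j (m - 1)) = U m \<omega>" by (simp add: U_def kk_def)
      have c: "U (m+1) \<omega> = \<eta> (m+1) \<omega> / real (kk (m+1))" by (simp add: U_def)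
      have "real (kk (m+1)) * U m \<omega> < \<eta> (m + 1) \<omega> \<longleftrightarrow> U m \<omega> < U (m+1) \<omega>"
        unfolding c using k1 by (simp add: pos_less_divide_eq mult.commute)
      then show ?thesis unfolding a b by blast
    qed
    have d': "\<eta> d \<omega> / real (j d - j (d - 1)) = U d \<omega>" for \<omega> by (simp add: U_def kk_def)
    show ?thesis unfolding Hs_def d'
    proof (rule Collect_cong)
      fix \<omega>
      have "(\<forall>m\<in>{1..<d}. \<eta> m \<omega> / real (j m - j (m - 1)) \<le> x m
                 \<and> real (j (m + 1) - j m) * \<eta> m \<omega> / real (j m - j (m - 1)) < \<eta> (m + 1) \<omega>)
         = (\<forall>m\<in>{1..<d}. U m \<omega> \<le> x m \<and> U m \<omega> < U (m+1) \<omega>)"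
        by (rule ball_cong[OF refl]) (rule iff)
      then show "(\<omega> \<in> space M \<and> (\<forall>m\<in>{1..<d}. \<eta> m \<omega> / real (j m - j (m - 1)) \<le> x m
                 \<and> real (j (m + 1) - j m) * \<eta> m \<omega> / real (j m - j (m - 1)) < \<eta> (m + 1) \<omega>) \<and> U d \<omega> \<le> x d)
        = (\<omega> \<in> space M \<and> (\<forall>m\<in>{1..<d}. U m \<omega> \<le> x m \<and> U m \<omega> < U (m+1) \<omega>) \<and> U d \<omega> \<le> x d)"
        by simp
    qed
  qed
  have split: "\<And>f :: nat \<Rightarrow> real. (\<Prod>m\<in>{1..d}. f m) = f 1 * (\<Prod>m=2..d. f m)"
    using d by (subst prod.atLeast_Suc_atMost) (auto simp: numeral_2_eq_2)
  have Pj: "(\<Prod>m=2..d. real (j m)) > 0"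
  proof (intro prod_pos)
    fix m assume "m \<in> {2..d}" then show "0 < real (j m)" using jpos[of m] by auto
  qed
  have Pk: "(\<Prod>m=2..d. real (j m - j (m - 1))) > 0"
  proof (intro prod_pos)
    fix m assume "m \<in> {2..d}" then show "0 < real (j m - j (m - 1))" using jlt[of "m - 1" m] by auto
  qed
  have j1: "real (j 1) > 0" using jpos[of 1] d by simp
  have cG: "cG d = 1 / (real (j 1) * (\<Prod>m=2..d. real (j m - j (m - 1))))"
    unfolding cG_def prod_dividef[of "\<lambda>_. 1" "\<lambda>m. real (kk m)", simplified] split
    by (simp add: kk_def j0)
  have cR: "cR d = 1 / (real (j 1) * (\<Prod>m=2..d. real (j m)))"
    unfolding cR_def prod_dividef[of "\<lambda>_. 1" "\<lambda>m. real (j m)", simplified] split by simp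
  show ?thesis
    unfolding cond_prob_def num den rhs_set cG cR using Pj Pk j1
    by (simp add: field_simps)
qed

end
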